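(* Let $I$ be any instance of the Partition problem with $n$ jobs, processing times $p_1\ge p_2\ge\dots\ge p_n>0$, optimal makespan $y^*$ and set of local optima $\mathcal{L}$. Let $\epsilon>0$ and $s:=\lceil 2/\epsilon\rceil-1\le n/2$; jobs $1,\dots,s$ are called large and the others small. Then: (1) for all $j\in\{s+1,\dots,n\}$, $p_j\le\frac{\epsilon}{2}\sum_{i=1}^n p_i$; (2) if at least one small job is assigned to the fuller machine of a solution $x\in\mathcal{L}$, then $x$ is a $(1+\epsilon)$ approximation; (3) if $\sum_{i=s+1}^n p_i\ge\frac12\sum_{i=1}^n p_i$, then every $x\in\mathcal{L}$ is a $(1+\epsilon)$ approximation; (4) $|\{y\in((1+\epsilon)y^*,\infty):\exists x\in\mathcal{L} \text{ with } f(x)=y\}|\le 2^{2/\epsilon}$.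
   Context: Partition problem: a solution $x\in\{0,1\}^n$ assigns job $i$ to machine $M_1$ if $x_i=0$ and to $M_2$ if $x_i=1$; the makespan $f(x)=\max\{\sum_i p_ix_i,\sum_i p_i(1-x_i)\}$ is minimised and $y^*=\min_x f(x)$. The fuller machine of $x$ is the machine whose load attains $f(x)$. A local optimum is a solution such that no solution at Hamming distance $1$ has strictly smaller makespan. A $(1+\epsilon)$ approximation is a solution $x$ with $f(x)\le(1+\epsilon)y^*$. *)

theory Defs
  imports "HOL-Library.FuncSet" Complex_Main
begin

text \<open>Jobs are indexed by 1..n, processing times p :: nat => real.
  A solution is x in {1..n} ->_E {0,1}; x i = 0 means machine M1, x i = 1 means M2.\<close>

definition solutions :: "nat \<Rightarrow> (nat \<Rightarrow> nat) set" where
  "solutions n = {1..n} \<rightarrow>\<^sub>E {0, 1}"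

definition load1 :: "(nat \<Rightarrow> real) \<Rightarrow> nat \<Rightarrow> (nat \<Rightarrow> nat) \<Rightarrow> real" where
  "load1 p n x = (\<Sum>i\<in>{1..n}. p i * (1 - real (x i)))"

definition load2 :: "(nat \<Rightarrow> real) \<Rightarrow> nat \<Rightarrow> (nat \<Rightarrow> nat) \<Rightarrow> real" where
  "load2 p n x = (\<Sum>i\<in>{1..n}. p i * real (x i))"

definition makespan :: "(nat \<Rightarrow> real) \<Rightarrow> nat \<Rightarrow> (nat \<Rightarrow> nat) \<Rightarrow> real" where
  "makespan p n x = max (load2 p n x) (load1 p n x)"

definition opt_makespan :: "(nat \<Rightarrow> real) \<Rightarrow> nat \<Rightarrow> real" where
  "opt_makespan p n = Min (makespan p n ` solutions n)"

definition hamming :: "nat \<Rightarrow> (nat \<Rightarrow> nat) \<Rightarrow> (nat \<Rightarrow> nat) \<Rightarrow> nat" where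
  "hamming n x y = card {i \<in> {1..n}. x i \<noteq> y i}"

definition local_optima :: "(nat \<Rightarrow> real) \<Rightarrow> nat \<Rightarrow> (nat \<Rightarrow> nat) set" where
  "local_optima p n = {x \<in> solutions n. \<forall>y \<in> solutions n.
      hamming n x y = 1 \<longrightarrow> \<not> makespan p n y < makespan p n x}"

definition on_fuller_machine :: "(nat \<Rightarrow> real) \<Rightarrow> nat \<Rightarrow> (nat \<Rightarrow> nat) \<Rightarrow> nat \<Rightarrow> bool" where
  "on_fuller_machine p n x j =
     ((x j = 0 \<and> load1 p n x = makespan p n x) \<or> (x j = 1 \<and> load2 p n x = makespan p n x))"

definition is_approx :: "(nat \<Rightarrow> real) \<Rightarrow> nat \<Rightarrow> real \<Rightarrow> (nat \<Rightarrow> nat) \<Rightarrow> bool" where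
  "is_approx p n \<epsilon> x = (makespan p n x \<le> (1 + \<epsilon>) * opt_makespan p n)"

end

theory Submission
  imports Defs
begin

lemma sol_val: "x \<in> solutions n \<Longrightarrow> i \<in> {1..n} \<Longrightarrow> x i = 0 \<or> x i = 1"
  unfolding solutions_def by (auto simp: PiE_def Pi_def)

lemma load_sum: "load1 p n x + load2 p n x = (\<Sum>i\<in>{1..n}. p i)"
  unfolding load1_def load2_def by (simp add: sum.distrib[symmetric] algebra_simps)

lemma fin_sol: "finite (solutions n)"
  unfolding solutions_def by (simp add: finite_PiE)

lemma ne_sol: "solutions n \<noteq> {}"
  unfolding solutions_def by (simp add: PiE_eq_empty_iff)

lemma opt_in: "\<exists>x\<in>solutions n. opt_makespan p n = makespan p n x"
  proof -
  have "Min (makespan p n ` solutions n) \<in> makespan p n ` solutions n"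
    using fin_sol ne_sol by (intro Min_in) auto
  thus ?thesis unfolding opt_makespan_def by auto
qed

lemma opt_ge: "(\<Sum>i\<in>{1..n}. p i) / 2 \<le> opt_makespan p n"
proof -
  obtain x where "opt_makespan p n = makespan p n x" using opt_in by blast
  thus ?thesis using load_sum[of p n x] unfolding makespan_def by auto
qed

lemma flip_sol:
  assumes x: "x \<in> solutions n" and j: "j \<in> {1..n}"
  shows "x(j := 1 - x j) \<in> solutions n" "hamming n x (x(j := 1 - x j)) = 1"
proof -
  show "x(j := 1 - x j) \<in> solutions n" using x j sol_val[OF x j]
    unfolding solutions_def by (auto simp: PiE_def Pi_def extensional_def)
  have "{i \<in> {1..n}. x i \<noteq> (x(j := 1 - x j)) i} = {j}" using j sol_val[OF x j] by auto
  thus "hamming n x (x(j := 1 - x j)) = 1" unfolding hamming_def by simp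
qed

lemma sum_upd:
  fixes n :: nat and f :: "nat \<Rightarrow> nat \<Rightarrow> real"
  assumes j: "j \<in> {1..n}" and that: "\<And>i. i \<noteq> j \<Longrightarrow> y i = x i"
  shows "(\<Sum>i\<in>{1..n}. f (y i) i) = (\<Sum>i\<in>{1..n}. f (x i) i) + f (y j) j - f (x j) j"
proof -
  have a: "(\<Sum>i\<in>{1..n}. f (y i) i) = f (y j) j + (\<Sum>i\<in>{1..n}-{j}. f (y i) i)"
    using j by (subst sum.remove[of "{1..n}" j]) auto
  have b: "(\<Sum>i\<in>{1..n}. f (x i) i) = f (x j) j + (\<Sum>i\<in>{1..n}-{j}. f (x i) i)"
    using j by (subst sum.remove[of "{1..n}" j]) auto
  have "(\<Sum>i\<in>{1..n}-{j}. f (y i) i) = (\<Sum>i\<in>{1..n}-{j}. f (x i) i)"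
    using that by (intro sum.cong) auto
  thus ?thesis using a b by simp
qed

lemma key:
  assumes x: "x \<in> local_optima p n" and j: "j \<in> {1..n}" and pj: "p j > 0"
    and f: "on_fuller_machine p n x j"
  shows "2 * makespan p n x \<le> (\<Sum>i\<in>{1..n}. p i) + p j"
proof -
  define y where "y = x(j := 1 - x j)"
  have xs: "x \<in> solutions n" using x unfolding local_optima_def by auto
  have ys: "y \<in> solutions n" "hamming n x y = 1" using flip_sol[OF xs j] y_def by auto
  hence nl: "\<not> makespan p n y < makespan p n x" using x unfolding local_optima_def by auto
  have oth: "\<And>i. i \<noteq> j \<Longrightarrow> y i = x i" using y_def by auto
  have l1: "load1 p n y = load1 p n x + p j * (1 - real (y j)) - p j * (1 - real (x j))"
    unfolding load1_def using sum_upd[OF j, of y x "\<lambda>v i. p i * (1 - real v)"] oth by simp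
  have l2: "load2 p n y = load2 p n x + p j * real (y j) - p j * real (x j)"
    unfolding load2_def using sum_upd[OF j, of y x "\<lambda>v i. p i * real v"] oth by simp
  have T: "load1 p n x + load2 p n x = (\<Sum>i\<in>{1..n}. p i)" by (rule load_sum)
  show ?thesis
  proof (cases "x j = 0")
    case True
    hence "y j = 1" using y_def by simp
    moreover have "load1 p n x = makespan p n x" using f True unfolding on_fuller_machine_def by auto
    ultimately show ?thesis using nl l1 l2 T pj True unfolding makespan_def by (auto simp: max_def split: if_splits)
  next
    case False
    hence "x j = 1" using sol_val[OF xs j] by auto
    hence "y j = 0" using y_def by simp
    moreover have "load2 p n x = makespan p n x" using f False unfolding on_fuller_machine_def by auto
    ultimately show ?thesis using nl l1 l2 T pj \<open>x j = 1\<close> unfolding makespan_def by (auto simp: max_def split: if_splits)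
  qed
qed


theorem mainTheorem13:
  fixes p :: "nat \<Rightarrow> real" and n s :: nat and \<epsilon> :: real
  assumes sorted: "\<And>i j. 1 \<le> i \<Longrightarrow> i \<le> j \<Longrightarrow> j \<le> n \<Longrightarrow> p j \<le> p i"
    and pos: "\<And>i. 1 \<le> i \<Longrightarrow> i \<le> n \<Longrightarrow> p i > 0"
    and eps: "\<epsilon> > 0"
    and s_def: "int s = \<lceil>2 / \<epsilon>\<rceil> - 1"
    and s_le: "real s \<le> real n / 2"
  shows "(\<forall>j \<in> {s+1..n}. p j \<le> \<epsilon> / 2 * (\<Sum>i\<in>{1..n}. p i))
    \<and> (\<forall>x \<in> local_optima p n. (\<exists>j \<in> {s+1..n}. on_fuller_machine p n x j)
          \<longrightarrow> is_approx p n \<epsilon> x)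
    \<and> ((\<Sum>i\<in>{s+1..n}. p i) \<ge> (1/2) * (\<Sum>i\<in>{1..n}. p i)
          \<longrightarrow> (\<forall>x \<in> local_optima p n. is_approx p n \<epsilon> x))
    \<and> real (card {y. y > (1 + \<epsilon>) * opt_makespan p n \<and>
                     (\<exists>x \<in> local_optima p n. makespan p n x = y)}) \<le> 2 powr (2 / \<epsilon>)"
proof -
  define T where "T = (\<Sum>i\<in>{1..n}. p i)"
  have T0: "T \<ge> 0" unfolding T_def using pos by (intro sum_nonneg) (auto intro: less_imp_le)
  have yopt: "T / 2 \<le> opt_makespan p n" unfolding T_def by (rule opt_ge)
  have sj: "real s + 1 \<ge> 2 / \<epsilon>" using s_def by linarith
  have ss: "real s < 2 / \<epsilon>" using s_def by linarith
  have P1: "\<forall>j \<in> {s+1..n}. p j \<le> \<epsilon> / 2 * T"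
  proof
    fix j assume j: "j \<in> {s+1..n}"
    have "(\<Sum>i\<in>{1..j}. p j) \<le> (\<Sum>i\<in>{1..j}. p i)"
      using j by (intro sum_mono sorted) auto
    also have "\<dots> \<le> T" unfolding T_def using j pos
      by (intro sum_mono2) (auto intro: less_imp_le)
    finally have "real j * p j \<le> T" by simp
    moreover have "real j \<ge> 2 / \<epsilon>" using j sj by auto
    moreover have "p j > 0" using j pos by auto
    ultimately have "2 / \<epsilon> * p j \<le> T"
      by (meson mult_right_mono less_imp_le order_trans)
    hence "2 * p j \<le> T * \<epsilon>" using eps by (simp add: field_simps)
    thus "p j \<le> \<epsilon> / 2 * T" by (simp add: algebra_simps)
  qed
  have P2: "\<forall>x \<in> local_optima p n. (\<exists>j \<in> {s+1..n}. on_fuller_machine p n x j)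
          \<longrightarrow> is_approx p n \<epsilon> x"
  proof (intro ballI impI)
    fix x assume x: "x \<in> local_optima p n" and "\<exists>j \<in> {s+1..n}. on_fuller_machine p n x j"
    then obtain j where j: "j \<in> {s+1..n}" and f: "on_fuller_machine p n x j" by blast
    have j1: "j \<in> {1..n}" using j by auto
    have "2 * makespan p n x \<le> T + p j" unfolding T_def
      using key[OF x j1 _ f] pos j1 by auto
    moreover have "p j \<le> \<epsilon> / 2 * T" using P1 j by auto
    moreover have "\<epsilon> * T \<le> \<epsilon> * (2 * opt_makespan p n)" using yopt eps by auto
    moreover have "\<epsilon> * T \<ge> 0" using eps T0 by simp
    ultimately show "is_approx p n \<epsilon> x" unfolding is_approx_def using yopt
      by (simp add: algebra_simps)
  qed
  have P3: "(\<Sum>i\<in>{s+1..n}. p i) \<ge> (1/2) * T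
          \<longrightarrow> (\<forall>x \<in> local_optima p n. is_approx p n \<epsilon> x)"
  proof (intro impI ballI)
    fix x assume big: "(\<Sum>i\<in>{s+1..n}. p i) \<ge> (1/2) * T" and x: "x \<in> local_optima p n"
    have xs: "x \<in> solutions n" using x unfolding local_optima_def by auto
    show "is_approx p n \<epsilon> x"
    proof (rule ccontr)
      assume na: "\<not> is_approx p n \<epsilon> x"
      hence nf: "\<And>j. j \<in> {s+1..n} \<Longrightarrow> \<not> on_fuller_machine p n x j" using P2 x by blast
      have LT: "load1 p n x + load2 p n x = T" unfolding T_def by (rule load_sum)
      have "makespan p n x \<le> T / 2"
      proof (cases "load2 p n x \<le> load1 p n x")
        case True
        hence M: "makespan p n x = load1 p n x" unfolding makespan_def by auto
        have "\<And>j. j \<in> {s+1..n} \<Longrightarrow> x j = 1"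
        proof -
          fix j assume j: "j \<in> {s+1..n}"
          have "x j = 0 \<or> x j = 1" using sol_val[OF xs, of j] j by auto
          moreover have "\<not> on_fuller_machine p n x j" using nf j by blast
          ultimately show "x j = 1" using M unfolding on_fuller_machine_def by auto
        qed
        hence "(\<Sum>i\<in>{s+1..n}. p i) = (\<Sum>i\<in>{s+1..n}. p i * real (x i))" by simp
        also have "\<dots> \<le> load2 p n x" unfolding load2_def
        proof (intro sum_mono2)
          fix i assume i: "i \<in> {1..n} - {s+1..n}"
          have "p i > 0" using pos i by auto
          thus "0 \<le> p i * real (x i)" by auto
        qed auto
        finally show ?thesis using big M LT by auto
      next
        case False
        hence M: "makespan p n x = load2 p n x" unfolding makespan_def by auto
        have "\<And>j. j \<in> {s+1..n} \<Longrightarrow> x j = 0"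
        proof -
          fix j assume j: "j \<in> {s+1..n}"
          have "x j = 0 \<or> x j = 1" using sol_val[OF xs, of j] j by auto
          moreover have "\<not> on_fuller_machine p n x j" using nf j by blast
          ultimately show "x j = 0" using M unfolding on_fuller_machine_def by auto
        qed
        hence "(\<Sum>i\<in>{s+1..n}. p i) = (\<Sum>i\<in>{s+1..n}. p i * (1 - real (x i)))" by simp
        also have "\<dots> \<le> load1 p n x" unfolding load1_def
        proof (intro sum_mono2)
          fix i assume i: "i \<in> {1..n} - {s+1..n}"
          hence "x i = 0 \<or> x i = 1" using sol_val[OF xs] by auto
          moreover have "p i > 0" using pos i by auto
          ultimately show "0 \<le> p i * (1 - real (x i))" by auto
        qed auto
        finally show ?thesis using big M LT by auto
      qed
      hence "makespan p n x \<le> (1 + \<epsilon>) * opt_makespan p n"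
      proof -
        have "opt_makespan p n \<ge> 0" using yopt T0 by linarith
        hence "\<epsilon> * opt_makespan p n \<ge> 0" using eps by simp
        thus ?thesis using yopt \<open>makespan p n x \<le> T / 2\<close> by (simp add: algebra_simps)
      qed
      thus False using na unfolding is_approx_def by simp
    qed
  qed
  define S where "S = {y. y > (1 + \<epsilon>) * opt_makespan p n \<and>
                     (\<exists>x \<in> local_optima p n. makespan p n x = y)}"
  have sub: "S \<subseteq> (\<lambda>A. sum p A) ` Pow {1..s}"
  proof
    fix y assume "y \<in> S"
    then obtain x where x: "x \<in> local_optima p n" and y: "makespan p n x = y"
      and gt: "y > (1 + \<epsilon>) * opt_makespan p n" unfolding S_def by auto
    have xs: "x \<in> solutions n" using x unfolding local_optima_def by auto
    have na: "\<not> is_approx p n \<epsilon> x" using gt y unfolding is_approx_def by auto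
    hence nf: "\<And>j. j \<in> {s+1..n} \<Longrightarrow> \<not> on_fuller_machine p n x j" using P2 x by blast
    have sn: "s \<le> n" using s_le by linarith
    show "y \<in> (\<lambda>A. sum p A) ` Pow {1..s}"
    proof (cases "load2 p n x \<le> load1 p n x")
      case True
      hence M: "makespan p n x = load1 p n x" unfolding makespan_def by auto
      have h: "\<And>j. j \<in> {s+1..n} \<Longrightarrow> x j = 1"
      proof -
        fix j assume j: "j \<in> {s+1..n}"
        have "x j = 0 \<or> x j = 1" using sol_val[OF xs, of j] j by auto
        moreover have "\<not> on_fuller_machine p n x j" using nf j by blast
        ultimately show "x j = 1" using M unfolding on_fuller_machine_def by auto
      qed
      define A where "A = {i\<in>{1..s}. x i = 0}"
      have "load1 p n x = (\<Sum>i\<in>{1..n}. if i \<in> A then p i else 0)"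
        unfolding load1_def
      proof (intro sum.cong refl)
        fix i assume i: "i \<in> {1..n}"
        show "p i * (1 - real (x i)) = (if i \<in> A then p i else 0)"
        proof (cases "i \<le> s")
          case True thus ?thesis using sol_val[OF xs i] i unfolding A_def by auto
        next
          case False thus ?thesis using h[of i] i unfolding A_def by auto
        qed
      qed
      also have "\<dots> = sum p ({1..n} \<inter> A)" by (simp add: sum.inter_restrict)
      also have "{1..n} \<inter> A = A" unfolding A_def using sn by auto
      finally show ?thesis using M y unfolding A_def by auto
    next
      case False
      hence M: "makespan p n x = load2 p n x" unfolding makespan_def by auto
      have h: "\<And>j. j \<in> {s+1..n} \<Longrightarrow> x j = 0"
      proof -
        fix j assume j: "j \<in> {s+1..n}"
        have "x j = 0 \<or> x j = 1" using sol_val[OF xs, of j] j by auto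
        moreover have "\<not> on_fuller_machine p n x j" using nf j by blast
        ultimately show "x j = 0" using M unfolding on_fuller_machine_def by auto
      qed
      define A where "A = {i\<in>{1..s}. x i = 1}"
      have "load2 p n x = (\<Sum>i\<in>{1..n}. if i \<in> A then p i else 0)"
        unfolding load2_def
      proof (intro sum.cong refl)
        fix i assume i: "i \<in> {1..n}"
        show "p i * real (x i) = (if i \<in> A then p i else 0)"
        proof (cases "i \<le> s")
          case True thus ?thesis using sol_val[OF xs i] i unfolding A_def by auto
        next
          case False thus ?thesis using h[of i] i unfolding A_def by auto
        qed
      qed
      also have "\<dots> = sum p ({1..n} \<inter> A)" by (simp add: sum.inter_restrict)
      also have "{1..n} \<inter> A = A" unfolding A_def using sn by auto
      finally show ?thesis using M y unfolding A_def by auto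
    qed
  qed
  have "card S \<le> card ((\<lambda>A. sum p A) ` Pow {1..s})"
    using sub by (intro card_mono) auto
  also have "\<dots> \<le> card (Pow {1..s})" by (rule card_image_le) simp
  also have "\<dots> = 2 ^ s" by (simp add: card_Pow)
  finally have "real (card S) \<le> 2 ^ s" by (metis of_nat_le_iff of_nat_numeral of_nat_power)
  also have "(2::real) ^ s = 2 powr (real s)" by (simp add: powr_realpow)
  also have "\<dots> \<le> 2 powr (2 / \<epsilon>)" using ss by (intro powr_mono) auto
  finally have P4: "real (card S) \<le> 2 powr (2 / \<epsilon>)" .
  show ?thesis using P1 P2 P3 P4 unfolding S_def T_def by blast
qed

end
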